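(* Let $d \geq 2$ and let $X$ be a $d$-dimensional simplicial complex on $n$ vertices with $\Delta(X) \leq K - 1$ for some integer $K \geq 5$. Then there exists a proper coloring $c$ of $V(X)$ using at most $18K^8 d^6 \lceil n^{1/d} \rceil$ colors such that no two $(d-1)$-dimensional faces of $X$ receive the same pattern under $c$.
   Context: For a finite simplicial complex $X$, $\mathrm{skel}_k(X)$ is the set of $k$-dimensional faces, $\Delta_{i,j}(X) = \max_{\sigma \in \mathrm{skel}_i(X)} |\{\tau \in \mathrm{skel}_j(X) : \sigma \subseteq \tau\}|$, and $\Delta(X) = \max_{i,j}\Delta_{i,j}(X)$. A coloring of $V(X)$ is proper if no two vertices joined by an edge receive the same color. The pattern of a face under a coloring is the multiset of colors of its vertices. *)

theory Defs
  imports Complex_Main "HOL-Library.Multiset"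
begin

definition simplicial_complex :: "'a set set \<Rightarrow> bool" where
  "simplicial_complex X \<longleftrightarrow> finite X \<and> (\<forall>\<sigma>\<in>X. finite \<sigma> \<and> \<sigma> \<noteq> {}) \<and>
     (\<forall>\<sigma>\<in>X. \<forall>\<tau>. \<tau> \<subseteq> \<sigma> \<and> \<tau> \<noteq> {} \<longrightarrow> \<tau> \<in> X)"

definition vertices :: "'a set set \<Rightarrow> 'a set" where
  "vertices X = \<Union>X"

text \<open>Dimension of a face is its cardinality minus one.\<close>
definition skel :: "nat \<Rightarrow> 'a set set \<Rightarrow> 'a set set" where
  "skel k X = {\<sigma>\<in>X. card \<sigma> = k + 1}"

definition cx_dim :: "'a set set \<Rightarrow> nat \<Rightarrow> bool" where
  "cx_dim X d \<longleftrightarrow> skel d X \<noteq> {} \<and> (\<forall>\<sigma>\<in>X. card \<sigma> \<le> d + 1)"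

definition Delta_ij :: "'a set set \<Rightarrow> nat \<Rightarrow> nat \<Rightarrow> nat" where
  "Delta_ij X i j = Max (insert 0 ((\<lambda>\<sigma>. card {\<tau>\<in>skel j X. \<sigma> \<subseteq> \<tau>}) ` skel i X))"

text \<open>Maximum over all i, j; only i, j up to the maximum face size matter
  (other skeleta are empty).\<close>
definition Delta :: "'a set set \<Rightarrow> nat" where
  "Delta X = Max {Delta_ij X i j | i j. i \<le> Max (insert 0 (card ` X)) \<and> j \<le> Max (insert 0 (card ` X))}"

definition proper_coloring :: "'a set set \<Rightarrow> ('a \<Rightarrow> 'c) \<Rightarrow> bool" where
  "proper_coloring X c \<longleftrightarrow> (\<forall>u\<in>vertices X. \<forall>v\<in>vertices X. u \<noteq> v \<and> {u, v} \<in> X \<longrightarrow> c u \<noteq> c v)"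

definition pattern :: "('a \<Rightarrow> 'c) \<Rightarrow> 'a set \<Rightarrow> 'c multiset" where
  "pattern c \<sigma> = image_mset c (mset_set \<sigma>)"

end

theory Submission
  imports Defs
begin

lemma le_of_mult_le: "a * p \<le> b * p \<Longrightarrow> 0 < (p::nat) \<Longrightarrow> a \<le> b" by simp

locale greedy =
  fixes X :: "'a set set" and D d r :: nat
  assumes sc: "simplicial_complex X"
    and deg: "\<And>\<rho> s. \<rho> \<in> X \<Longrightarrow> card {\<sigma>\<in>X. card \<sigma> = s \<and> \<rho> \<subseteq> \<sigma>} \<le> D"
    and r_pos: "1 \<le> r" and d_pos: "1 \<le> d"
    and nV: "card (vertices X) \<le> r ^ d"
begin

definition "Nb z = {w. {z, w} \<in> X}"
definition "d2 u w \<longleftrightarrow> (\<exists>z. {u, z} \<in> X \<and> {z, w} \<in> X)"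
definition "cnt W c s S = card {\<sigma>\<in>X. card \<sigma> = s \<and> \<sigma> \<subseteq> W \<and> c ` \<sigma> = S}"
definition "mm = (D+1)*(D+1) + r + d*(D*D*r) + 1"
definition "sep W c \<longleftrightarrow> (\<forall>u\<in>W. \<forall>w\<in>W. u \<noteq> w \<and> d2 u w \<longrightarrow> c u \<noteq> c w)"
definition "Inv W c \<longleftrightarrow> c ` W \<subseteq> {..<mm} \<and> sep W c \<and>
   (\<forall>s\<in>{1..d}. \<forall>S. cnt W c s S \<le> r ^ (d - s))"

lemma finX: "finite X" using sc unfolding simplicial_complex_def by blast
lemma face_fin: "\<sigma> \<in> X \<Longrightarrow> finite \<sigma>" using sc unfolding simplicial_complex_def by blast
lemma face_ne: "\<sigma> \<in> X \<Longrightarrow> \<sigma> \<noteq> {}" using sc unfolding simplicial_complex_def by blast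
lemma face_sub: "\<sigma> \<in> X \<Longrightarrow> \<tau> \<subseteq> \<sigma> \<Longrightarrow> \<tau> \<noteq> {} \<Longrightarrow> \<tau> \<in> X"
  using sc unfolding simplicial_complex_def by blast
lemma finV: "finite (vertices X)" unfolding vertices_def using finX face_fin by auto
lemma face_V: "\<sigma> \<in> X \<Longrightarrow> \<sigma> \<subseteq> vertices X" unfolding vertices_def by auto
lemma single_in: "v \<in> vertices X \<Longrightarrow> {v} \<in> X"
  unfolding vertices_def using face_sub by blast
lemma pair_in: "\<sigma> \<in> X \<Longrightarrow> u \<in> \<sigma> \<Longrightarrow> w \<in> \<sigma> \<Longrightarrow> {u,w} \<in> X"
  by (rule face_sub) auto
lemma Nb_V: "Nb z \<subseteq> vertices X" unfolding Nb_def vertices_def by blast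
lemma Nb_fin: "finite (Nb z)" using Nb_V finV finite_subset by blast

lemma Nb_card: "card (Nb z) \<le> D + 1"
proof (cases "Nb z = {}")
  case True thus ?thesis by simp
next
  case False
  then obtain w where "{z,w}\<in>X" by (auto simp: Nb_def)
  hence zX: "{z} \<in> X" by (rule face_sub) auto
  have inj: "inj_on (\<lambda>w. {z,w}) (Nb z - {z})" by (auto simp: inj_on_def doubleton_eq_iff)
  have sub: "(\<lambda>w. {z,w}) ` (Nb z - {z}) \<subseteq> {\<sigma>\<in>X. card \<sigma> = 2 \<and> {z} \<subseteq> \<sigma>}" by (auto simp: Nb_def)
  have "card (Nb z - {z}) = card ((\<lambda>w. {z,w}) ` (Nb z - {z}))" using card_image[OF inj] by simp
  also have "\<dots> \<le> card {\<sigma>\<in>X. card \<sigma> = 2 \<and> {z} \<subseteq> \<sigma>}" by (rule card_mono[OF _ sub]) (use finX in auto)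
  also have "\<dots> \<le> D" by (rule deg[OF zX])
  finally have a: "card (Nb z - {z}) \<le> D" .
  have "card (Nb z) \<le> card (insert z (Nb z - {z}))" by (rule card_mono) (use Nb_fin in auto)
  also have "\<dots> = Suc (card (Nb z - {z}))" by (rule card_insert_disjoint) (use Nb_fin in auto)
  finally show ?thesis using a by simp
qed

lemma sep_inj: "sep W c \<Longrightarrow> \<sigma> \<in> X \<Longrightarrow> \<sigma> \<subseteq> W \<Longrightarrow> inj_on c \<sigma>"
  unfolding inj_on_def
proof (intro ballI impI, rule ccontr)
  fix u w assume s: "sep W c" "\<sigma> \<in> X" "\<sigma> \<subseteq> W" "u \<in> \<sigma>" "w \<in> \<sigma>" "c u = c w" "u \<noteq> w"
  have "{u,u} \<in> X" "{u,w} \<in> X" using pair_in[OF s(2) s(4) s(4)] pair_in[OF s(2) s(4) s(5)] by auto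
  hence "d2 u w" unfolding d2_def by blast
  thus False using s unfolding sep_def by blast
qed

lemma sep_Nb: "sep W c \<Longrightarrow> inj_on c (Nb v \<inter> W)"
  unfolding inj_on_def
proof (intro ballI impI, rule ccontr)
  fix u w assume s: "sep W c" "u \<in> Nb v \<inter> W" "w \<in> Nb v \<inter> W" "c u = c w" "u \<noteq> w"
  have "{u,v} \<in> X" "{v,w} \<in> X" using s by (auto simp: Nb_def insert_commute)
  hence "d2 u w" unfolding d2_def by blast
  thus False using s unfolding sep_def by blast
qed

lemma cnt1: "W \<subseteq> vertices X \<Longrightarrow> cnt W c 1 {x} = card {w\<in>W. c w = x}"
proof -
  assume W: "W \<subseteq> vertices X"
  have "{\<sigma>\<in>X. card \<sigma> = 1 \<and> \<sigma> \<subseteq> W \<and> c ` \<sigma> = {x}} = (\<lambda>w. {w}) ` {w\<in>W. c w = x}"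
  proof
    show "{\<sigma>\<in>X. card \<sigma> = 1 \<and> \<sigma> \<subseteq> W \<and> c ` \<sigma> = {x}} \<subseteq> (\<lambda>w. {w}) ` {w\<in>W. c w = x}"
      by (auto simp: card_1_singleton_iff)
    show "(\<lambda>w. {w}) ` {w\<in>W. c w = x} \<subseteq> {\<sigma>\<in>X. card \<sigma> = 1 \<and> \<sigma> \<subseteq> W \<and> c ` \<sigma> = {x}}"
      using W single_in by auto
  qed
  moreover have "inj_on (\<lambda>w. {w}) {w\<in>W. c w = x}" by (auto simp: inj_on_def)
  ultimately show ?thesis unfolding cnt_def by (simp add: card_image)
qed

lemma F1_card:
  assumes W: "finite W" "W \<subseteq> vertices X"
  shows "card {x. r^(d-1) \<le> card {w\<in>W. c w = x}} \<le> r"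
proof -
  define F where "F = {x. r^(d-1) \<le> card {w\<in>W. c w = x}}"
  have p: "r^(d-1) \<ge> 1" using r_pos by simp
  have "F \<subseteq> c ` W"
  proof
    fix x assume "x \<in> F"
    hence "card {w\<in>W. c w = x} > 0" using p unfolding F_def by auto
    hence "{w\<in>W. c w = x} \<noteq> {}" by (metis card.empty less_irrefl)
    thus "x \<in> c ` W" by auto
  qed
  hence fF: "finite F" using W finite_subset by blast
  have "card F * r^(d-1) = (\<Sum>x\<in>F. r^(d-1))" by simp
  also have "\<dots> \<le> (\<Sum>x\<in>F. card {w\<in>W. c w = x})" by (rule sum_mono) (simp add: F_def)
  also have "\<dots> = card (\<Union>x\<in>F. {w\<in>W. c w = x})"
    by (rule card_UN_disjoint[symmetric]) (use fF W in auto)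
  also have "\<dots> \<le> card W" by (rule card_mono) (use W in auto)
  also have "\<dots> \<le> card (vertices X)" by (rule card_mono[OF finV W(2)])
  also have "\<dots> \<le> r ^ d" by (rule nV)
  also have "\<dots> = r * r^(d-1)" using d_pos by (cases d) auto
  finally have cc: "card F * r^(d-1) \<le> r * r^(d-1)" .
  have pp: "0 < r^(d-1)" using p by linarith
  have "card F \<le> r" using cc pp by (rule le_of_mult_le)
  thus ?thesis unfolding F_def .
qed

end

context greedy begin

lemma key_count:
  assumes sp: "sep W c" and s2: "2 \<le> s" and fG: "finite G" and GT: "G \<inter> T = {}"
  shows "(\<Sum>x\<in>G. cnt W c s (insert x T)) \<le> D * cnt W c (s-1) T"
proof -
  define A where "A x = {\<sigma>\<in>X. card \<sigma> = s \<and> \<sigma> \<subseteq> W \<and> c ` \<sigma> = insert x T}" for x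
  define B where "B = {\<rho>\<in>X. card \<rho> = s-1 \<and> \<rho> \<subseteq> W \<and> c ` \<rho> = T}"
  have fB: "finite B" unfolding B_def using finX by auto
  have "(\<Sum>x\<in>G. cnt W c s (insert x T)) = (\<Sum>x\<in>G. card (A x))" unfolding cnt_def A_def by simp
  also have "\<dots> = card (\<Union>x\<in>G. A x)"
  proof (rule card_UN_disjoint[symmetric])
    show "finite G" by fact
    show "\<forall>i\<in>G. finite (A i)" unfolding A_def using finX by auto
    show "\<forall>i\<in>G. \<forall>j\<in>G. i \<noteq> j \<longrightarrow> A i \<inter> A j = {}"
    proof (intro ballI impI)
      fix i j assume ij: "i \<in> G" "j \<in> G" "i \<noteq> j"
      show "A i \<inter> A j = {}"
      proof (rule ccontr)
        assume "A i \<inter> A j \<noteq> {}"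
        then obtain \<sigma> where "\<sigma> \<in> A i" "\<sigma> \<in> A j" by blast
        hence "insert i T = insert j T" unfolding A_def by auto
        moreover have "i \<notin> T" "j \<notin> T" using GT ij by auto
        ultimately show False using ij by blast
      qed
    qed
  qed
  also have "\<dots> \<le> card (\<Union>\<rho>\<in>B. {\<sigma>\<in>X. card \<sigma> = s \<and> \<rho> \<subseteq> \<sigma>})"
  proof (rule card_mono)
    show "finite (\<Union>\<rho>\<in>B. {\<sigma>\<in>X. card \<sigma> = s \<and> \<rho> \<subseteq> \<sigma>})" by (rule rev_finite_subset[OF finX]) auto
    show "(\<Union>x\<in>G. A x) \<subseteq> (\<Union>\<rho>\<in>B. {\<sigma>\<in>X. card \<sigma> = s \<and> \<rho> \<subseteq> \<sigma>})"
    proof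
      fix \<sigma> assume "\<sigma> \<in> (\<Union>x\<in>G. A x)"
      then obtain x where x: "x \<in> G" "\<sigma> \<in> X" "card \<sigma> = s" "\<sigma> \<subseteq> W" "c ` \<sigma> = insert x T"
        unfolding A_def by auto
      define \<rho> where "\<rho> = {w\<in>\<sigma>. c w \<in> T}"
      have inj: "inj_on c \<sigma>" by (rule sep_inj[OF sp x(2) x(4)])
      have fs: "finite \<sigma>" using face_fin x(2) by blast
      have xT: "x \<notin> T" using x(1) GT by auto
      have img: "c ` \<rho> = T" unfolding \<rho>_def using x(5) by auto
      have fT: "finite T" using x(5) fs by (metis finite_imageI finite_insert)
      have "card (insert x T) = s" using x(3) x(5) card_image[OF inj] by simp
      hence cT: "card T = s - 1" using xT fT by simp
      have rs: "\<rho> \<subseteq> \<sigma>" unfolding \<rho>_def by auto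
      have "card \<rho> = card T" using img card_image[OF inj_on_subset[OF inj rs]] by simp
      hence cr: "card \<rho> = s - 1" using cT by simp
      hence "\<rho> \<noteq> {}" using s2 by auto
      hence "\<rho> \<in> X" using face_sub[OF x(2) rs] by blast
      hence rB: "\<rho> \<in> B" unfolding B_def using cr img rs x(4) by simp
      show "\<sigma> \<in> (\<Union>\<rho>\<in>B. {\<sigma>\<in>X. card \<sigma> = s \<and> \<rho> \<subseteq> \<sigma>})"
        by (rule UN_I[OF rB]) (use rs x in simp)
    qed
  qed
  also have "\<dots> \<le> (\<Sum>\<rho>\<in>B. card {\<sigma>\<in>X. card \<sigma> = s \<and> \<rho> \<subseteq> \<sigma>})" by (rule card_UN_le[OF fB])
  also have "\<dots> \<le> (\<Sum>\<rho>\<in>B. D)"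
  proof (rule sum_mono)
    fix \<rho> assume "\<rho> \<in> B"
    hence "\<rho> \<in> X" by (simp add: B_def)
    thus "card {\<sigma>\<in>X. card \<sigma> = s \<and> \<rho> \<subseteq> \<sigma>} \<le> D" by (rule deg)
  qed
  also have "\<dots> = D * cnt W c (s-1) T" unfolding cnt_def B_def by simp
  finally show ?thesis .
qed

lemma G_sub: "1 \<le> r^(d-s) \<Longrightarrow> r^(d-s) \<le> cnt W c s (insert x T) \<Longrightarrow> x \<in> c ` W"
proof -
  assume "1 \<le> r^(d-s)" "r^(d-s) \<le> cnt W c s (insert x T)"
  hence "cnt W c s (insert x T) > 0" by linarith
  hence "{\<sigma>\<in>X. card \<sigma> = s \<and> \<sigma> \<subseteq> W \<and> c ` \<sigma> = insert x T} \<noteq> {}" unfolding cnt_def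
    using card_gt_0_iff by blast
  then obtain \<sigma> where "\<sigma> \<subseteq> W" "c ` \<sigma> = insert x T" by blast
  thus "x \<in> c ` W" by blast
qed

lemma G_card:
  assumes sp: "sep W c" and s2: "2 \<le> s" and sd: "s \<le> d" and cb: "cnt W c (s-1) T \<le> r^(d-(s-1))"
    and fW: "finite W"
  shows "card {x. x \<notin> T \<and> r^(d-s) \<le> cnt W c s (insert x T)} \<le> D * r"
proof -
  define G where "G = {x. x \<notin> T \<and> r^(d-s) \<le> cnt W c s (insert x T)}"
  have p: "1 \<le> r^(d-s)" using r_pos by (rule one_le_power)
  have "G \<subseteq> c ` W"
  proof
    fix x assume "x \<in> G"
    hence "r^(d-s) \<le> cnt W c s (insert x T)" by (simp add: G_def)
    thus "x \<in> c ` W" by (rule G_sub[OF p])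
  qed
  hence fG: "finite G" using fW finite_subset by blast
  have e0: "d-(s-1) = Suc (d-s)" using s2 sd by arith
  have e: "r^(d-(s-1)) = r * r^(d-s)" unfolding e0 by (rule power_Suc)
  have "card G * r^(d-s) = (\<Sum>x\<in>G. r^(d-s))" by simp
  also have "\<dots> \<le> (\<Sum>x\<in>G. cnt W c s (insert x T))" by (rule sum_mono) (simp add: G_def)
  also have "\<dots> \<le> D * cnt W c (s-1) T" by (rule key_count[OF sp s2 fG]) (auto simp: G_def)
  also have "\<dots> \<le> D * r^(d-(s-1))" using cb by (rule mult_le_mono2)
  also have "\<dots> = (D * r) * r^(d-s)" unfolding e by (simp only: mult.assoc)
  finally have cc: "card G * r^(d-s) \<le> (D * r) * r^(d-s)" .
  have pp: "0 < r^(d-s)" using p by linarith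
  have "card G \<le> D * r" using cc pp by (rule le_of_mult_le)
  thus ?thesis unfolding G_def .
qed

lemma R_card:
  assumes "v \<notin> W" "v \<in> vertices X"
  shows "card {\<rho>\<in>X. card \<rho> = k \<and> \<rho> \<subseteq> W \<and> insert v \<rho> \<in> X} \<le> D"
proof -
  define R where "R = {\<rho>\<in>X. card \<rho> = k \<and> \<rho> \<subseteq> W \<and> insert v \<rho> \<in> X}"
  have inj: "inj_on (insert v) R"
    unfolding inj_on_def
  proof (intro ballI impI)
    fix a b assume ab: "a \<in> R" "b \<in> R" "insert v a = insert v b"
    have "v \<notin> a" "v \<notin> b" using ab(1,2) assms(1) unfolding R_def by auto
    hence "a = insert v a - {v}" "b = insert v b - {v}" by auto
    thus "a = b" using ab(3) by simp
  qed
  have sub: "insert v ` R \<subseteq> {\<sigma>\<in>X. card \<sigma> = Suc k \<and> {v} \<subseteq> \<sigma>}"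
  proof
    fix \<sigma> assume "\<sigma> \<in> insert v ` R"
    then obtain \<rho> where r: "\<rho> \<in> R" "\<sigma> = insert v \<rho>" by blast
    have "v \<notin> \<rho>" using r(1) assms(1) unfolding R_def by auto
    moreover have "finite \<rho>" using r(1) face_fin unfolding R_def by auto
    ultimately show "\<sigma> \<in> {\<sigma>\<in>X. card \<sigma> = Suc k \<and> {v} \<subseteq> \<sigma>}" using r unfolding R_def by auto
  qed
  have "card R = card (insert v ` R)" using card_image[OF inj] by simp
  also have "\<dots> \<le> card {\<sigma>\<in>X. card \<sigma> = Suc k \<and> {v} \<subseteq> \<sigma>}" by (rule card_mono[OF _ sub]) (use finX in auto)
  also have "\<dots> \<le> D" by (rule deg[OF single_in[OF assms(2)]])
  finally show ?thesis unfolding R_def .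
qed

end

lemma ins_diff_eq: "insert x B = S \<Longrightarrow> x \<notin> B \<Longrightarrow> B = S - {x}" by auto

context greedy begin

lemma step:
  assumes I: "Inv W c" and fW: "finite W" and WV: "W \<subseteq> vertices X"
    and vV: "v \<in> vertices X" and vW: "v \<notin> W"
  shows "\<exists>c'. Inv (insert v W) c'"
proof -
  from I have rng: "c ` W \<subseteq> {..<mm}" and sp: "sep W c"
    and cb: "\<And>s S. s \<in> {1..d} \<Longrightarrow> cnt W c s S \<le> r^(d-s)" unfolding Inv_def by auto
  define F0 where "F0 = c ` (\<Union>z\<in>Nb v. Nb z \<inter> W)"
  define F1 where "F1 = {x. r^(d-1) \<le> card {w\<in>W. c w = x}}"
  define R where "R s = {\<rho>\<in>X. card \<rho> = s - 1 \<and> \<rho> \<subseteq> W \<and> insert v \<rho> \<in> X}" for s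
  define G where "G s T = {x. x \<notin> T \<and> r^(d-s) \<le> cnt W c s (insert x T)}" for s T
  define F2 where "F2 = (\<Union>s\<in>{2..d}. \<Union>\<rho>\<in>R s. G s (c ` \<rho>))"
  have fU: "finite (\<Union>z\<in>Nb v. Nb z \<inter> W)" using Nb_fin by auto
  have "card F0 \<le> card (\<Union>z\<in>Nb v. Nb z \<inter> W)" unfolding F0_def by (rule card_image_le[OF fU])
  also have "\<dots> \<le> (\<Sum>z\<in>Nb v. card (Nb z \<inter> W))" by (rule card_UN_le[OF Nb_fin])
  also have "\<dots> \<le> (\<Sum>z\<in>Nb v. D + 1)"
  proof (rule sum_mono)
    fix z
    have "card (Nb z \<inter> W) \<le> card (Nb z)" by (rule card_mono[OF Nb_fin]) auto
    thus "card (Nb z \<inter> W) \<le> D + 1" using Nb_card[of z] by linarith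
  qed
  also have "\<dots> = card (Nb v) * (D+1)" by simp
  also have "\<dots> \<le> (D+1) * (D+1)" using Nb_card[of v] by (rule mult_le_mono1)
  finally have cF0: "card F0 \<le> (D+1)*(D+1)" .
  have cF1: "card F1 \<le> r" unfolding F1_def by (rule F1_card[OF fW WV])
  have cR: "card (R s) * (D * r) \<le> D * (D * r)" for s
    using R_card[OF vW vV, of "s-1"] unfolding R_def by (rule mult_le_mono1)
  have fR: "finite (R s)" for s unfolding R_def by (rule rev_finite_subset[OF finX]) auto
  have cG: "card (\<Union>\<rho>\<in>R s. G s (c ` \<rho>)) \<le> D * (D * r)" if s: "s \<in> {2..d}" for s
  proof -
    have "card (\<Union>\<rho>\<in>R s. G s (c ` \<rho>)) \<le> (\<Sum>\<rho>\<in>R s. card (G s (c ` \<rho>)))" by (rule card_UN_le[OF fR])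
    also have "\<dots> \<le> (\<Sum>\<rho>\<in>R s. D * r)"
    proof (rule sum_mono)
      fix \<rho> assume "\<rho> \<in> R s"
      have s1: "s - 1 \<in> {1..d}" using s by auto
      have "cnt W c (s-1) (c ` \<rho>) \<le> r^(d-(s-1))" by (rule cb[OF s1])
      moreover have "2 \<le> s" "s \<le> d" using s by auto
      ultimately show "card (G s (c ` \<rho>)) \<le> D * r" unfolding G_def
        by (intro G_card[OF sp _ _ _ fW])
    qed
    also have "\<dots> = card (R s) * (D * r)" by simp
    also have "\<dots> \<le> D * (D * r)" by (rule cR)
    finally show ?thesis .
  qed
  have "card F2 \<le> (\<Sum>s\<in>{2..d}. card (\<Union>\<rho>\<in>R s. G s (c ` \<rho>)))" unfolding F2_def by (rule card_UN_le) simp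
  also have "\<dots> \<le> (\<Sum>s\<in>{2..d}. D * (D * r))" by (rule sum_mono) (rule cG)
  also have "\<dots> = card {2..d} * (D * (D * r))" by simp
  also have "\<dots> \<le> d * (D * (D * r))" by (rule mult_le_mono1) simp
  finally have cF2: "card F2 \<le> d * (D * D * r)" by (simp add: mult.assoc)
  have cF: "card (F0 \<union> F1 \<union> F2) < mm"
  proof -
    have "card (F0 \<union> F1 \<union> F2) \<le> card (F0 \<union> F1) + card F2" by (rule card_Un_le)
    also have "\<dots> \<le> card F0 + card F1 + card F2" using card_Un_le[of F0 F1] by linarith
    finally show ?thesis using cF0 cF1 cF2 unfolding mm_def by linarith
  qed
  have p1: "1 \<le> r^(d-s)" for s using r_pos by (rule one_le_power)
  have F1W: "F1 \<subseteq> c ` W"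
  proof
    fix x assume "x \<in> F1"
    hence "card {w\<in>W. c w = x} > 0" using p1[of 1] unfolding F1_def by simp
    hence "{w\<in>W. c w = x} \<noteq> {}" using card_gt_0_iff by blast
    then obtain w where "w \<in> W" "c w = x" by blast
    thus "x \<in> c ` W" using imageI[of w W c] by simp
  qed
  have F2W: "F2 \<subseteq> c ` W"
  proof
    fix x assume "x \<in> F2"
    then obtain s T where "r^(d-s) \<le> cnt W c s (insert x T)" unfolding F2_def G_def by blast
    thus "x \<in> c ` W" by (rule G_sub[OF p1])
  qed
  have fcW: "finite (c ` W)" using fW by simp
  have fF: "finite (F0 \<union> F1 \<union> F2)"
    using finite_subset[OF F1W fcW] finite_subset[OF F2W fcW] finite_imageI[OF fU, of c]
    unfolding F0_def by simp
  obtain x where x: "x < mm" "x \<notin> F0 \<union> F1 \<union> F2"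
  proof -
    have "\<not> {..<mm} \<subseteq> F0 \<union> F1 \<union> F2"
    proof
      assume "{..<mm} \<subseteq> F0 \<union> F1 \<union> F2"
      hence "card {..<mm} \<le> card (F0 \<union> F1 \<union> F2)" by (rule card_mono[OF fF])
      thus False using cF by simp
    qed
    thus ?thesis using that by auto
  qed
  define c' where "c' = c(v := x)"
  have vNb: "v \<in> Nb v" unfolding Nb_def using single_in[OF vV] by simp
  have NbF0: "c w \<in> F0" if "w \<in> Nb z \<inter> W" "z \<in> Nb v" for w z
    unfolding F0_def by (rule imageI, rule UN_I[OF that(2)], rule that(1))
  have xNb: "c w \<noteq> x" if "w \<in> Nb v \<inter> W" for w
    using NbF0[OF that vNb] x(2) by auto
  have injNb: "inj_on c (Nb v \<inter> W)" by (rule sep_Nb[OF sp])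
  have Aimg: "c' ` \<sigma> = insert x (c ` (\<sigma> - {v}))" "\<sigma> - {v} \<subseteq> Nb v \<inter> W" "x \<notin> c ` (\<sigma> - {v})"
    if "\<sigma> \<in> X" "v \<in> \<sigma>" "\<sigma> \<subseteq> insert v W" for \<sigma>
  proof -
    show "c' ` \<sigma> = insert x (c ` (\<sigma> - {v}))" unfolding c'_def fun_upd_image using that(2) by (rule if_P)
    show sub: "\<sigma> - {v} \<subseteq> Nb v \<inter> W"
    proof
      fix w assume "w \<in> \<sigma> - {v}"
      thus "w \<in> Nb v \<inter> W" using pair_in[OF that(1) that(2), of w] that(3) unfolding Nb_def by auto
    qed
    show "x \<notin> c ` (\<sigma> - {v})"
    proof
      assume "x \<in> c ` (\<sigma> - {v})"
      then obtain w where "w \<in> \<sigma> - {v}" "x = c w" by blast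
      thus False using xNb sub by auto
    qed
  qed
  have "Inv (insert v W) c'"
    unfolding Inv_def
  proof (intro conjI)
    show "c' ` insert v W \<subseteq> {..<mm}"
    proof
      fix y assume "y \<in> c' ` insert v W"
      then obtain w where w: "w \<in> insert v W" "y = c' w" by blast
      show "y \<in> {..<mm}"
      proof (cases "w = v")
        case True thus ?thesis using w x(1) unfolding c'_def by simp
      next
        case False
        hence "w \<in> W" "y = c w" using w unfolding c'_def by auto
        thus ?thesis using rng by auto
      qed
    qed
    show "sep (insert v W) c'"
      unfolding sep_def
    proof (intro ballI impI)
      fix u w assume u: "u \<in> insert v W" and w: "w \<in> insert v W" and uw: "u \<noteq> w \<and> d2 u w"
      then obtain z where z: "{u, z} \<in> X" "{z, w} \<in> X" unfolding d2_def by blast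
      show "c' u \<noteq> c' w"
      proof (cases "u = v")
        case True
        hence wW: "w \<in> W" "w \<noteq> v" using w uw by auto
        have "z \<in> Nb v" using z True unfolding Nb_def by simp
        moreover have "w \<in> Nb z \<inter> W" using z wW unfolding Nb_def by simp
        ultimately have "c w \<in> F0" by (rule NbF0[rotated])
        hence "c w \<noteq> x" using x(2) by auto
        thus ?thesis using True wW unfolding c'_def by simp
      next
        case False
        hence uW: "u \<in> W" using u by auto
        show ?thesis
        proof (cases "w = v")
          case True
          have "z \<in> Nb v" using z True unfolding Nb_def by (simp add: insert_commute)
          moreover have "u \<in> Nb z \<inter> W" using z uW unfolding Nb_def by (simp add: insert_commute)
          ultimately have "c u \<in> F0" by (rule NbF0[rotated])
          hence "c u \<noteq> x" using x(2) by auto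
          thus ?thesis using True False unfolding c'_def by simp
        next
          case False2: False
          hence "w \<in> W" using w by auto
          hence "c u \<noteq> c w" using sp uW uw unfolding sep_def by blast
          thus ?thesis using False False2 unfolding c'_def by simp
        qed
      qed
    qed
    show "\<forall>s\<in>{1..d}. \<forall>S. cnt (insert v W) c' s S \<le> r ^ (d - s)"
    proof (intro ballI allI)
      fix s S assume s: "s \<in> {1..d}"
      define Old where "Old = {\<sigma>\<in>X. card \<sigma> = s \<and> \<sigma> \<subseteq> W \<and> c ` \<sigma> = S}"
      define A where "A = {\<sigma>\<in>X. card \<sigma> = s \<and> \<sigma> \<subseteq> insert v W \<and> v \<in> \<sigma> \<and> c' ` \<sigma> = S}"
      have split: "{\<sigma>\<in>X. card \<sigma> = s \<and> \<sigma> \<subseteq> insert v W \<and> c' ` \<sigma> = S} \<subseteq> Old \<union> A"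
      proof
        fix \<sigma> assume h: "\<sigma> \<in> {\<sigma>\<in>X. card \<sigma> = s \<and> \<sigma> \<subseteq> insert v W \<and> c' ` \<sigma> = S}"
        show "\<sigma> \<in> Old \<union> A"
        proof (cases "v \<in> \<sigma>")
          case True thus ?thesis using h unfolding A_def by simp
        next
          case False
          hence "\<sigma> \<subseteq> W" "c' ` \<sigma> = c ` \<sigma>" using h unfolding c'_def by (auto simp: fun_upd_image)
          thus ?thesis using h unfolding Old_def by simp
        qed
      qed
      have fOld: "finite Old" unfolding Old_def by (rule rev_finite_subset[OF finX]) auto
      have fA: "finite A" unfolding A_def by (rule rev_finite_subset[OF finX]) auto
      have cA: "card A \<le> 1"
      proof -
        have "\<forall>a1\<in>A. \<forall>a2\<in>A. a1 = a2"
        proof (intro ballI)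
          fix a1 a2 assume a1: "a1 \<in> A" and a2: "a2 \<in> A"
          have h1: "a1 \<in> X" "v \<in> a1" "a1 \<subseteq> insert v W" "c' ` a1 = S" using a1 unfolding A_def by auto
          have h2: "a2 \<in> X" "v \<in> a2" "a2 \<subseteq> insert v W" "c' ` a2 = S" using a2 unfolding A_def by auto
          note i1 = Aimg[OF h1(1-3)] and i2 = Aimg[OF h2(1-3)]
          have "c ` (a1 - {v}) = S - {x}" using i1(1) h1(4) i1(3) by (intro ins_diff_eq) simp_all
          moreover have "c ` (a2 - {v}) = S - {x}" using i2(1) h2(4) i2(3) by (intro ins_diff_eq) simp_all
          ultimately have "a1 - {v} = a2 - {v}"
            using inj_on_image_eq_iff[OF injNb i1(2) i2(2)] by simp
          moreover have "a1 = insert v (a1 - {v})" using h1(2) by auto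
          moreover have "a2 = insert v (a2 - {v})" using h2(2) by auto
          ultimately show "a1 = a2" by simp
        qed
        thus ?thesis using card_le_Suc0_iff_eq[OF fA] by simp
      qed
      have cOld: "card Old \<le> r^(d-s)" using cb[OF s] unfolding cnt_def Old_def .
      have bound: "card Old + card A \<le> r^(d-s)"
      proof (cases "A = {}")
        case True thus ?thesis using cOld by simp
      next
        case False
        then obtain \<sigma>0 where a0: "\<sigma>0 \<in> A" by blast
        have h0: "\<sigma>0 \<in> X" "card \<sigma>0 = s" "\<sigma>0 \<subseteq> insert v W" "v \<in> \<sigma>0" "c' ` \<sigma>0 = S"
          using a0 unfolding A_def by auto
        note i0 = Aimg[OF h0(1) h0(4) h0(3)]
        have lt: "card Old < r^(d-s)"
        proof (cases "s = 1")
          case True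
          obtain w0 where "\<sigma>0 = {w0}" using h0(2) True card_1_singleton_iff[of \<sigma>0] by auto
          hence "\<sigma>0 = {v}" using h0(4) by simp
          hence SS: "S = {x}" using h0(5) unfolding c'_def by simp
          have "x \<notin> F1" using x(2) by simp
          hence "card {w\<in>W. c w = x} < r^(d-1)" unfolding F1_def by simp
          moreover have "card Old = card {w\<in>W. c w = x}"
            using cnt1[OF WV, of c x] unfolding cnt_def Old_def SS True by simp
          ultimately show ?thesis using True by simp
        next
          case False
          hence s2: "s \<in> {2..d}" using s by auto
          define \<rho> where "\<rho> = \<sigma>0 - {v}"
          have fs: "finite \<sigma>0" using face_fin h0(1) by blast
          have cr: "card \<rho> = s - 1" unfolding \<rho>_def using h0(2) h0(4) fs by simp
          hence rne: "\<rho> \<noteq> {}" using s2 by auto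
          have rX: "\<rho> \<in> X" by (rule face_sub[OF h0(1) _ rne]) (auto simp: \<rho>_def)
          have "\<rho> \<subseteq> W" using i0(2) unfolding \<rho>_def by blast
          moreover have "insert v \<rho> = \<sigma>0" unfolding \<rho>_def using h0(4) by blast
          ultimately have rR: "\<rho> \<in> R s" unfolding R_def using rX cr h0(1) by simp
          have "G s (c ` \<rho>) \<subseteq> F2" unfolding F2_def
            by (rule subsetI, rule UN_I[OF s2], rule UN_I[OF rR])
          hence "x \<notin> G s (c ` \<rho>)" using x(2) by auto
          moreover have "x \<notin> c ` \<rho>" using i0(3) unfolding \<rho>_def .
          ultimately have "\<not> r^(d-s) \<le> cnt W c s (insert x (c ` \<rho>))" unfolding G_def by simp
          moreover have "insert x (c ` \<rho>) = S" using i0(1) h0(5) unfolding \<rho>_def by simp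
          ultimately show ?thesis unfolding cnt_def Old_def by simp
        qed
        thus ?thesis using cA by linarith
      qed
      have "cnt (insert v W) c' s S \<le> card (Old \<union> A)"
        unfolding cnt_def by (rule card_mono) (use fOld fA split in auto)
      also have "\<dots> \<le> card Old + card A" by (rule card_Un_le)
      finally show "cnt (insert v W) c' s S \<le> r ^ (d - s)" using bound by linarith
    qed
  qed
  thus ?thesis by blast
qed

lemma exists_Inv: "finite W \<Longrightarrow> W \<subseteq> vertices X \<Longrightarrow> \<exists>c. Inv W c"
proof (induction W rule: finite_induct)
  case empty
  have "cnt {} (\<lambda>_. 0::nat) s S = 0" for s S
  proof -
    have "{\<sigma>\<in>X. card \<sigma> = s \<and> \<sigma> \<subseteq> {} \<and> (\<lambda>_. 0::nat) ` \<sigma> = S} = {}" using face_ne by auto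
    thus ?thesis unfolding cnt_def by simp
  qed
  hence "Inv {} (\<lambda>_. 0::nat)" unfolding Inv_def sep_def by simp
  thus ?case by blast
next
  case (insert v W)
  have WV: "W \<subseteq> vertices X" "v \<in> vertices X" using insert.prems by auto
  then obtain c where "Inv W c" using insert.IH by blast
  from step[OF this insert.hyps(1) WV(1) WV(2) insert.hyps(2)] show ?case .
qed

lemma main_coloring:
  "\<exists>c. c ` vertices X \<subseteq> {..<mm} \<and> sep (vertices X) c \<and> (\<forall>S. cnt (vertices X) c d S \<le> 1)"
proof -
  obtain c where "Inv (vertices X) c" using exists_Inv[OF finV] by blast
  moreover have "d \<in> {1..d}" using d_pos by simp
  ultimately show ?thesis unfolding Inv_def by fastforce
qed

end


lemma delta_deg:
  fixes X :: "'a set set"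
  assumes sc: "simplicial_complex X" and cd: "cx_dim X d" and \<rho>X: "\<rho> \<in> X"
  shows "card {\<sigma>\<in>X. card \<sigma> = s \<and> \<rho> \<subseteq> \<sigma>} \<le> Delta X"
proof -
  have finX: "finite X" and ff: "\<And>\<sigma>. \<sigma> \<in> X \<Longrightarrow> finite \<sigma> \<and> \<sigma> \<noteq> {}"
    using sc unfolding simplicial_complex_def by auto
  have dle: "\<And>\<sigma>. \<sigma> \<in> X \<Longrightarrow> card \<sigma> \<le> d + 1" using cd unfolding cx_dim_def by auto
  obtain \<sigma>d where \<sigma>d: "\<sigma>d \<in> X" "card \<sigma>d = d + 1" using cd unfolding cx_dim_def skel_def by auto
  define M where "M = Max (insert 0 (card ` X))"
  have fM: "finite (insert 0 (card ` X))" using finX by simp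
  have "M \<le> d + 1" unfolding M_def using fM dle by (simp add: Max_le_iff)
  moreover have "d + 1 \<le> M" unfolding M_def using fM \<sigma>d by (metis Max_ge image_eqI insertCI)
  ultimately have M: "M = d + 1" by simp
  show ?thesis
  proof (cases "1 \<le> s \<and> s \<le> d + 1")
    case False
    have "{\<sigma>\<in>X. card \<sigma> = s \<and> \<rho> \<subseteq> \<sigma>} = {}"
    proof (rule ccontr)
      assume "{\<sigma>\<in>X. card \<sigma> = s \<and> \<rho> \<subseteq> \<sigma>} \<noteq> {}"
      then obtain \<sigma> where s: "\<sigma> \<in> X" "card \<sigma> = s" by blast
      have "card \<sigma> > 0" using ff[OF s(1)] by (simp add: card_gt_0_iff)
      thus False using dle[OF s(1)] s(2) False by linarith
    qed
    thus ?thesis by (metis card.empty zero_le)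
  next
    case True
    define i where "i = card \<rho> - 1"
    define j where "j = s - 1"
    have c0: "card \<rho> > 0" using ff[OF \<rho>X] by (simp add: card_gt_0_iff)
    have ci: "card \<rho> = i + 1" unfolding i_def using c0 by simp
    have i_le: "i \<le> M" using dle[OF \<rho>X] ci M by simp
    have j_le: "j \<le> M" using True M unfolding j_def by arith
    have \<rho>i: "\<rho> \<in> skel i X" unfolding skel_def using \<rho>X ci by simp
    have eq: "{\<sigma>\<in>X. card \<sigma> = s \<and> \<rho> \<subseteq> \<sigma>} = {\<tau>\<in>skel j X. \<rho> \<subseteq> \<tau>}"
      unfolding skel_def j_def using True by auto
    have fs: "finite (skel i X)" unfolding skel_def using finX by simp
    have "card {\<tau>\<in>skel j X. \<rho> \<subseteq> \<tau>} \<le> Delta_ij X i j"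
      unfolding Delta_ij_def
      by (rule Max_ge) (use fs \<rho>i in auto)
    also have "Delta_ij X i j \<le> Delta X"
      unfolding Delta_def
    proof (rule Max_ge)
      have "{Delta_ij X i j |i j. i \<le> Max (insert 0 (card ` X)) \<and> j \<le> Max (insert 0 (card ` X))}
          \<subseteq> (\<lambda>(i,j). Delta_ij X i j) ` ({..M} \<times> {..M})" unfolding M_def by auto
      thus "finite {Delta_ij X i j |i j. i \<le> Max (insert 0 (card ` X)) \<and> j \<le> Max (insert 0 (card ` X))}"
        by (rule finite_subset) simp
      show "Delta_ij X i j \<in> {Delta_ij X i j |i j. i \<le> Max (insert 0 (card ` X)) \<and> j \<le> Max (insert 0 (card ` X))}"
        using i_le j_le unfolding M_def by blast
    qed
    finally show ?thesis using eq by simp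
  qed
qed

theorem lemma3:
  fixes X :: "'a set set" and d n :: nat and K :: int
  assumes "d \<ge> 2"
    and "simplicial_complex X"
    and "cx_dim X d"
    and "card (vertices X) = n"
    and "K \<ge> 5"
    and "int (Delta X) \<le> K - 1"
  shows "\<exists>c :: 'a \<Rightarrow> nat.
           proper_coloring X c \<and>
           real (card (c ` vertices X)) \<le>
             18 * real_of_int K ^ 8 * real d ^ 6 * real_of_int \<lceil>real n powr (1 / real d)\<rceil> \<and>
           inj_on (pattern c) (skel (d - 1) X)"
proof -
  define k where "k = nat K"
  have Kk: "K = int k" "k \<ge> 5" using assms(5) unfolding k_def by auto
  define D where "D = k - 1"
  have DeltaD: "Delta X \<le> D" using assms(6) Kk unfolding D_def by linarith
  have deg: "\<And>\<rho> s. \<rho> \<in> X \<Longrightarrow> card {\<sigma>\<in>X. card \<sigma> = s \<and> \<rho> \<subseteq> \<sigma>} \<le> D"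
    using delta_deg[OF assms(2) assms(3)] DeltaD le_trans by blast
  have finX: "finite X" and ff: "\<And>\<sigma>. \<sigma> \<in> X \<Longrightarrow> finite \<sigma> \<and> \<sigma> \<noteq> {}"
    using assms(2) unfolding simplicial_complex_def by auto
  obtain \<sigma>d where \<sigma>d: "\<sigma>d \<in> X" "card \<sigma>d = d + 1" using assms(3) unfolding cx_dim_def skel_def by auto
  have "\<sigma>d \<subseteq> vertices X" unfolding vertices_def using \<sigma>d by auto
  moreover have "finite (vertices X)" unfolding vertices_def using finX ff by auto
  ultimately have "card \<sigma>d \<le> n" using assms(4) card_mono by blast
  hence n1: "1 \<le> n" using \<sigma>d by simp
  define y where "y = real n powr (1 / real d)"
  have ypos: "y > 0" unfolding y_def using n1 by simp
  define r where "r = nat \<lceil>y\<rceil>"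
  have ry: "real r = real_of_int \<lceil>y\<rceil>" unfolding r_def using ypos by simp
  have "0 < \<lceil>y\<rceil>" using ypos by simp
  hence r1: "1 \<le> r" unfolding r_def by linarith
  have "real n = y ^ d"
  proof -
    have "y ^ d = y powr real d" using ypos by (simp add: powr_realpow)
    also have "\<dots> = real n powr (1 / real d * real d)" unfolding y_def by (simp add: powr_powr)
    also have "\<dots> = real n" using assms(1) n1 by simp
    finally show ?thesis by simp
  qed
  also have "\<dots> \<le> real r ^ d" using ypos ry by (intro power_mono) simp_all
  finally have nr: "n \<le> r ^ d" by (simp add: of_nat_le_iff[symmetric] del: of_nat_le_iff) 
  interpret greedy X D d r
    by unfold_locales (use assms deg r1 nr in auto)
  obtain c where c: "c ` vertices X \<subseteq> {..<mm}" "sep (vertices X) c" "\<And>S. cnt (vertices X) c d S \<le> 1"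
    using main_coloring by blast
  have proper: "proper_coloring X c"
    unfolding proper_coloring_def
  proof (intro ballI impI)
    fix u v assume uv: "u \<in> vertices X" "v \<in> vertices X" "u \<noteq> v \<and> {u, v} \<in> X"
    have "{u, u} \<in> X" using single_in[OF uv(1)] by simp
    hence "d2 u v" using uv unfolding d2_def by blast
    thus "c u \<noteq> c v" using c(2) uv unfolding sep_def by blast
  qed
  have cardc: "card (c ` vertices X) \<le> mm"
    using card_mono[OF _ c(1)] by simp
  have "mm \<le> 18 * k^8 * d^6 * r"
  proof -
    have Dk: "D + 1 = k" using Kk unfolding D_def by simp
    have a: "(D+1)*(D+1) \<le> k*k*r" using mult_le_mono2[OF r1, of "k*k"] Dk by simp
    have Dle: "D \<le> k" using Dk by simp
    have "D*D*r \<le> k*k*r" by (rule mult_le_mono1[OF mult_le_mono[OF Dle Dle]])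
    hence b: "d*(D*D*r) \<le> d*(k*k*r)" by (rule mult_le_mono2)
    have "mm \<le> k*k*r + r + d*(k*k*r) + r" unfolding mm_def using a b r1 by linarith
    also have "\<dots> \<le> 4 * (d * (k*k*r))"
    proof -
      have "1 \<le> k*k" using Kk by simp
      hence h1: "r \<le> k*k*r" using mult_le_mono1[of 1 "k*k" r] by simp
      have h2: "k*k*r \<le> d*(k*k*r)" using assms(1) mult_le_mono1[of 1 d "k*k*r"] by simp
      show ?thesis using h1 h2 by linarith
    qed
    also have "\<dots> = (4 * d * (k*k)) * r" by (simp add: algebra_simps)
    also have "\<dots> \<le> (18 * k^8 * d^6) * r"
    proof (rule mult_le_mono1)
      have "k*k \<le> k^8" using Kk power_increasing[of 2 8 k] by (simp add: power2_eq_square)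
      moreover have "d \<le> d^6" using assms(1) power_increasing[of 1 6 d] by simp
      ultimately have m: "(k*k) * d \<le> k^8 * d^6" by (rule mult_le_mono)
      have e1: "4 * d * (k*k) = 4 * ((k*k) * d)" by (simp add: algebra_simps)
      have e2: "18 * k^8 * d^6 = 18 * (k^8 * d^6)" by (simp add: algebra_simps)
      show "4 * d * (k*k) \<le> 18 * k^8 * d^6" unfolding e1 e2 using m by linarith
    qed
    finally show ?thesis .
  qed
  hence "real (card (c ` vertices X)) \<le> real (18 * k^8 * d^6 * r)" using cardc by linarith
  also have "\<dots> = 18 * real_of_int K ^ 8 * real d ^ 6 * real_of_int \<lceil>real n powr (1 / real d)\<rceil>"
    using ry Kk unfolding y_def by simp
  finally have bnd: "real (card (c ` vertices X)) \<le> 18 * real_of_int K ^ 8 * real d ^ 6 * real_of_int \<lceil>real n powr (1 / real d)\<rceil>" .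
  have inj: "inj_on (pattern c) (skel (d - 1) X)"
  proof (rule inj_onI)
    fix \<sigma> \<tau> assume s: "\<sigma> \<in> skel (d-1) X" "\<tau> \<in> skel (d-1) X" and pe: "pattern c \<sigma> = pattern c \<tau>"
    have sX: "\<sigma> \<in> X" "card \<sigma> = d" "\<tau> \<in> X" "card \<tau> = d" using s assms(1) unfolding skel_def by auto
    have "set_mset (pattern c \<sigma>) = c ` \<sigma>" unfolding pattern_def using ff[OF sX(1)] by simp
    moreover have "set_mset (pattern c \<tau>) = c ` \<tau>" unfolding pattern_def using ff[OF sX(3)] by simp
    ultimately have im: "c ` \<sigma> = c ` \<tau>" using pe by simp
    define Q where "Q = {\<rho>\<in>X. card \<rho> = d \<and> \<rho> \<subseteq> vertices X \<and> c ` \<rho> = c ` \<sigma>}"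
    have fQ: "finite Q" unfolding Q_def using finX by simp
    have "card Q \<le> Suc 0" using c(3)[of "c ` \<sigma>"] unfolding cnt_def Q_def by simp
    hence all: "\<forall>a\<in>Q. \<forall>b\<in>Q. a = b" using card_le_Suc0_iff_eq[OF fQ] by simp
    have "\<sigma> \<in> Q" "\<tau> \<in> Q" unfolding Q_def using sX im face_V by auto
    thus "\<sigma> = \<tau>" using all by blast
  qed
  show ?thesis using proper bnd inj by blast
qed


end
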